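(* Let $q=2^m$, let $k\in\mathbb{F}_q$ with $Tr(k)=1$, let $i\in\mathbb{F}_{q^2}\setminus\mathbb{F}_q$ with $i^2=i+k$, and let $\alpha=A+iB$, $\beta=C+iD$ with $A,B,C,D\in\mathbb{F}_q$ and $\alpha\beta\neq 0$. Then the following are equivalent: (i) $m$ is odd, $C=A+B+1$, $D=B$, $A^2+AB+B^2k+B=0$, and $B\neq 0$; (ii) $\beta=\alpha^{q-1}\in\mathbb{F}_{q^2}\setminus\mathbb{F}_q$, $Tr\left(1+\frac{1}{\alpha^{q+1}}\right)=0$, and $\alpha+\alpha^q=\beta+\beta^q$.
   Context: $Tr:\mathbb{F}_q\to\mathbb{F}_2$ is the absolute trace $Tr(z)=z+z^2+\cdots+z^{2^{m-1}}$. *)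

theory Defs
  imports Main
begin

definition subfield_q :: "nat \<Rightarrow> ('a::field) set" where
  "subfield_q m = {x. x ^ (2 ^ m) = x}"

text \<open>Absolute trace Tr(z) = z + z^2 + ... + z^(2^(m-1)), computed in the ambient field
  (its value lies in the prime field {0,1}).\<close>
definition abs_trace :: "nat \<Rightarrow> 'a::field \<Rightarrow> 'a" where
  "abs_trace m z = (\<Sum>j<m. z ^ (2 ^ j))"

end

theory Submission
  imports Defs "HOL-Number_Theory.Number_Theory"
begin

lemma char2_of_card:
  assumes "card (UNIV :: 'a::{field,finite} set) = 2 ^ (2 * m)" "m \<ge> 1"
  shows "(2::'a) = 0"
proof -
  have pos: "CHAR('a) > 0" by (rule finite_imp_CHAR_pos) simp
  have pr: "prime CHAR('a)" using prime_CHAR_semidom[OF pos] .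
  have "CHAR('a) dvd 2 ^ (2*m)" using CHAR_dvd_CARD[where 'a='a] assms(1) by simp
  hence "CHAR('a) dvd 2" using pr prime_dvd_power by blast
  hence "CHAR('a) = 2" using pr by (metis primes_dvd_imp_eq two_is_prime_nat)
  hence "of_nat 2 = (0::'a)" by (metis of_nat_CHAR)
  thus ?thesis by simp
qed

lemma c2_eq: fixes a b c :: "'a::field" assumes "(2::'a)=0" "a = b + 2*c" shows "a = b" using assms by simp
lemma c2_self: fixes x :: "'a::field" assumes "(2::'a)=0" shows "x + x = 0"
proof - have "x + x = x*2" by (simp add: mult_2_right) thus ?thesis using assms by simp qed
lemma c2_minus: fixes x :: "'a::field" assumes "(2::'a)=0" shows "- x = x"
  using c2_self[OF assms, of x] by (metis eq_neg_iff_add_eq_0)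
lemma c2_diff: fixes a b :: "'a::field" assumes "(2::'a)=0" shows "a - b = a + b"
  using c2_minus[OF assms, of b] by (metis diff_conv_add_uminus)
lemma c2_sq: fixes x y :: "'a::field" assumes "(2::'a)=0" shows "(x+y)^2 = x^2 + y^2"
  by (rule c2_eq[OF assms, of _ _ "x*y"]) (simp add: power2_eq_square algebra_simps)
lemma c2_pow: fixes x y :: "'a::field" assumes "(2::'a)=0" shows "(x+y)^(2^j) = x^(2^j) + y^(2^j)"
proof (induction j)
  case 0 then show ?case by simp
next
  case (Suc j)
  have "(x+y)^(2^Suc j) = ((x+y)^(2^j))^2" by (simp add: power_mult[symmetric] mult.commute)
  also have "\<dots> = (x^(2^j))^2 + (y^(2^j))^2" using Suc c2_sq[OF assms] by simp
  also have "\<dots> = x^(2^Suc j) + y^(2^Suc j)" by (simp add: power_mult[symmetric] mult.commute)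
  finally show ?case .
qed
lemma c2_tr_add: fixes x y :: "'a::field" assumes "(2::'a)=0" shows "abs_trace m (x+y) = abs_trace m x + abs_trace m y"
  by (simp add: abs_trace_def c2_pow[OF assms] sum.distrib)
lemma tr_one: "abs_trace m (1::'a::field) = of_nat m" by (simp add: abs_trace_def)
lemma c2_tr_AS: fixes x :: "'a::field" assumes "(2::'a)=0" "x^(2^m) = x" shows "abs_trace m (x^2+x) = 0"
proof -
  have "abs_trace m (x^2+x) = (\<Sum>j<m. x^(2^Suc j) - x^(2^j))"
    unfolding abs_trace_def
  proof (rule sum.cong)
    fix j
    have "(x^2+x)^(2^j) = (x^2)^(2^j) + x^(2^j)" by (rule c2_pow[OF assms(1)])
    also have "(x^2)^(2^j) = x^(2^Suc j)" by (simp add: power_mult[symmetric] mult.commute)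
    finally show "(x^2+x)^(2^j) = x^(2^Suc j) - x^(2^j)" using c2_diff[OF assms(1)] by simp
  qed simp
  also have "\<dots> = x^(2^m) - x" by (subst sum_lessThan_telescope) simp
  finally show ?thesis using assms(2) by simp
qed
lemma c2_of_nat: assumes "(2::'a::field)=0" shows "(of_nat n::'a) = (if odd n then 1 else 0)"
proof -
  have "n = 2*(n div 2) + n mod 2" by simp
  hence "(of_nat n::'a) = of_nat 2 * of_nat (n div 2) + of_nat (n mod 2)" by (metis of_nat_add of_nat_mult)
  also have "(of_nat 2::'a) = 0" using assms by simp
  finally show ?thesis by (cases "odd n") (auto simp: odd_iff_mod_2_eq_one even_iff_mod_2_eq_zero)
qed

theorem proposition6:
  fixes m :: nat and k i A B C D :: "'a::{field,finite}"
  assumes card: "card (UNIV :: 'a set) = 2 ^ (2 * m)"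
    and m_pos: "m \<ge> 1"
    and k_in: "k \<in> subfield_q m"
    and trk: "abs_trace m k = 1"
    and i_notin: "i \<notin> subfield_q m"
    and i_sq: "i ^ 2 = i + k"
    and ABCD: "A \<in> subfield_q m" "B \<in> subfield_q m" "C \<in> subfield_q m" "D \<in> subfield_q m"
    and nz: "(A + i * B) * (C + i * D) \<noteq> 0"
  shows "(odd m \<and> C = A + B + 1 \<and> D = B \<and> A ^ 2 + A * B + B ^ 2 * k + B = 0 \<and> B \<noteq> 0)
     \<longleftrightarrow>
     (let \<alpha> = A + i * B; \<beta> = C + i * D; q = (2::nat) ^ m in
        \<beta> = \<alpha> ^ (q - 1) \<and> \<beta> \<notin> subfield_q m
        \<and> abs_trace m (1 + 1 / \<alpha> ^ (q + 1)) = 0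
        \<and> \<alpha> + \<alpha> ^ q = \<beta> + \<beta> ^ q)"
proof -
  have two: "(2::'a) = 0" by (rule char2_of_card[OF card m_pos])
  define q where "q = (2::nat)^m"
  have q_pos: "q > 0" by (simp add: q_def)
  have Fq: "x \<in> subfield_q m \<longleftrightarrow> x^q = x" for x::'a by (simp add: subfield_q_def q_def)
  have fadd: "(x+y)^q = x^q + y^q" for x y :: 'a unfolding q_def by (rule c2_pow[OF two])
  have fdiff: "(x-y)^q = x^q - y^q" for x y :: 'a by (simp only: c2_diff[OF two] fadd)
  have fmul: "(x*y)^q = x^q*y^q" for x y :: 'a by (simp add: power_mult_distrib)
  have fdiv: "(x/y)^q = x^q/y^q" for x y :: 'a by (simp add: power_divide)
  have fpow: "(x^n)^q = (x^q)^n" for x :: 'a and n by (simp add: power_mult[symmetric] mult.commute)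
  have kq: "k^q = k" using k_in Fq by blast
  have Aq: "A^q = A" and Bq: "B^q = B" and Cq: "C^q = C" and Dq: "D^q = D" using ABCD Fq by blast+
  have ik: "i^2 - i - k = 0" using i_sq by simp
  have iq: "i^q = i + 1"
  proof -
    define s where "s = i^q"
    have sne: "s \<noteq> i" using i_notin Fq s_def by auto
    have "s^2 = (i^2)^q" unfolding s_def by (rule fpow[symmetric])
    also have "\<dots> = s + k" using i_sq fadd kq s_def by simp
    finally have s2: "s^2 - s - k = 0" by simp
    have "(s+i)*(s+i+1) = (s^2 - s - k) + (i^2 - i - k) + 2*(s*i + s + i + k)"
      by (simp add: algebra_simps power2_eq_square)
    also have "\<dots> = 0" using s2 ik two by simp
    finally have "(s+i)*(s+i+1) = 0" .
    moreover have "s + i \<noteq> 0"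
    proof
      assume "s + i = 0"
      hence "s = - i" by (simp add: eq_neg_iff_add_eq_0)
      thus False using sne c2_minus[OF two, of i] by simp
    qed
    ultimately have "s + i + 1 = 0" by simp
    hence "s = - (i + 1)" by (metis add.assoc eq_neg_iff_add_eq_0)
    thus ?thesis using c2_minus[OF two, of "i+1"] s_def by simp
  qed
  define al where "al = A + i*B"
  define be where "be = C + i*D"
  have alnz: "al \<noteq> 0" and benz: "be \<noteq> 0" using nz al_def be_def by auto
  have alq: "al^q = A + B + i*B" by (simp add: al_def fadd fmul iq Aq Bq algebra_simps)
  have beq: "be^q = C + D + i*D" by (simp add: be_def fadd fmul iq Cq Dq algebra_simps)
  have norm: "al * al^q = A^2 + A*B + k*B^2"
  proof -
    have "al * al^q = A^2 + A*B + k*B^2 + (i^2 - i - k)*B^2 + 2*(i*A*B + i*B^2)"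
      unfolding alq unfolding al_def by (simp add: algebra_simps power2_eq_square)
    thus ?thesis using ik two by simp
  qed
  have sumal: "al + al^q = B"
    by (rule c2_eq[OF two, of _ _ "A + i*B"]) (unfold alq, unfold al_def, simp add: algebra_simps)
  have sumbe: "be + be^q = D"
    by (rule c2_eq[OF two, of _ _ "C + i*D"]) (unfold beq, unfold be_def, simp add: algebra_simps)
  have indep: "X = X' \<and> Y = Y'" if h: "X^q = X" "Y^q = Y" "X'^q = X'" "Y'^q = Y'" "X + i*Y = X' + i*Y'"
    for X Y X' Y' :: 'a
  proof (cases "Y = Y'")
    case True then show ?thesis using h(5) by simp
  next
    case False
    hence ne: "Y - Y' \<noteq> 0" by simp
    have "i*(Y - Y') = X' - X" using h(5) by (simp add: algebra_simps)
    hence ieq: "i = (X' - X)/(Y - Y')" using ne by (simp add: field_simps)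
    have "i^q = (X' - X)/(Y - Y')" unfolding ieq fdiv fdiff h(1-4) ..
    hence "i^q = i" using ieq by simp
    thus ?thesis using i_notin Fq by blast
  qed
  have trkey: "abs_trace m (1/B) = 1" if h: "B \<noteq> 0" "A^2 + A*B + B^2*k + B = 0"
  proof -
    define x where "x = A/B"
    have xq: "x^(2^m) = x" using Aq Bq fdiv x_def q_def by simp
    have "A^2 + A*B + B^2*k = - B" using h(2) by (simp add: eq_neg_iff_add_eq_0 add.assoc)
    hence N: "A^2 + A*B + B^2*k = B" using c2_minus[OF two, of B] by simp
    have "x^2 + x + k = (A^2 + A*B + B^2*k)/B^2" using h(1) unfolding x_def
      by (simp add: field_simps power2_eq_square)
    also have "\<dots> = 1/B" using N h(1) by (simp add: power2_eq_square)
    finally have "1/B = (x^2 + x) + k" by simp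
    hence "abs_trace m (1/B) = abs_trace m (x^2+x) + abs_trace m k" using c2_tr_add[OF two] by simp
    also have "\<dots> = 1" using c2_tr_AS[OF two xq] trk by simp
    finally show ?thesis .
  qed
  have trN: "abs_trace m (1 + 1/al^(q+1)) = of_nat m + 1"
    if h: "B \<noteq> 0" "A^2 + A*B + B^2*k + B = 0"
  proof -
    have "A^2 + A*B + B^2*k = - B" using h(2) by (simp add: eq_neg_iff_add_eq_0 add.assoc)
    hence N: "A^2 + A*B + B^2*k = B" using c2_minus[OF two, of B] by simp
    have "al^(q+1) = B" using norm N by (simp add: mult.commute)
    hence "abs_trace m (1 + 1/al^(q+1)) = abs_trace m 1 + abs_trace m (1/B)" using c2_tr_add[OF two] by simp
    thus ?thesis using trkey[OF h] tr_one by simp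
  qed
  have betaeq: "be = al^(q-1) \<longleftrightarrow> be * al = al^q"
  proof
    assume "be = al^(q-1)" thus "be * al = al^q" using power_minus_mult[OF q_pos] by simp
  next
    assume "be * al = al^q"
    hence "be * al = al^(q-1) * al" using power_minus_mult[OF q_pos, of al] by argo
    thus "be = al^(q-1)" using alnz by simp
  qed
  have main: "(odd m \<and> C = A + B + 1 \<and> D = B \<and> A ^ 2 + A * B + B ^ 2 * k + B = 0 \<and> B \<noteq> 0)
     \<longleftrightarrow> (be = al^(q-1) \<and> be \<notin> subfield_q m \<and> abs_trace m (1 + 1 / al ^ (q + 1)) = 0
        \<and> al + al ^ q = be + be ^ q)"
  proof
    assume h: "odd m \<and> C = A + B + 1 \<and> D = B \<and> A ^ 2 + A * B + B ^ 2 * k + B = 0 \<and> B \<noteq> 0"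
    have "A^2 + A*B + B^2*k = - B" using h by (simp add: eq_neg_iff_add_eq_0 add.assoc)
    hence N: "A^2 + A*B + k*B^2 = B" using c2_minus[OF two, of B] by (simp add: mult.commute)
    have be1: "be = al^q + 1" using h by (simp add: be_def alq algebra_simps)
    have "be * al = al * al^q + al" unfolding be1 by (simp add: algebra_simps)
    also have "\<dots> = al^q" using N norm unfolding alq unfolding al_def by (simp add: algebra_simps)
    finally have 1: "be = al^(q-1)" using betaeq by simp
    have 2: "be \<notin> subfield_q m"
    proof
      assume "be \<in> subfield_q m"
      hence "be^q = be" using Fq by blast
      hence "C + D + i*D = C + i*D" using beq be_def by simp
      thus False using h by simp
    qed
    have 3: "abs_trace m (1 + 1 / al ^ (q + 1)) = 0"
      using trN h c2_of_nat[OF two, of m] two by simp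
    have 4: "al + al ^ q = be + be ^ q" using sumal sumbe h by simp
    show "be = al^(q-1) \<and> be \<notin> subfield_q m \<and> abs_trace m (1 + 1 / al ^ (q + 1)) = 0
        \<and> al + al ^ q = be + be ^ q" using 1 2 3 4 by blast
  next
    assume h: "be = al^(q-1) \<and> be \<notin> subfield_q m \<and> abs_trace m (1 + 1 / al ^ (q + 1)) = 0
        \<and> al + al ^ q = be + be ^ q"
    have DB: "D = B" using h sumal sumbe by simp
    have Bnz: "B \<noteq> 0"
    proof
      assume "B = 0"
      hence "be = C" using DB be_def by simp
      thus False using h Cq Fq by blast
    qed
    have "be * al = al^q" using h betaeq by blast
    moreover have "be * al = (C*A + k*B*B) + i*(C*B + A*B + B*B) + (i^2 - i - k)*B*B"
      unfolding be_def al_def DB by (simp add: algebra_simps power2_eq_square)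
    ultimately have "(C*A + k*B*B) + i*(C*B + A*B + B*B) = (A + B) + i*B"
      using ik alq by (simp add: algebra_simps)
    moreover have "(C*A + k*B*B)^q = C*A + k*B*B" by (simp add: fadd fmul Cq Aq kq Bq)
    moreover have "(C*B + A*B + B*B)^q = C*B + A*B + B*B" by (simp add: fadd fmul Cq Aq Bq)
    moreover have "(A+B)^q = A+B" by (simp add: fadd Aq Bq)
    ultimately have e1: "C*A + k*B*B = A + B" and e2: "C*B + A*B + B*B = B"
      using indep Bq by blast+
    have "(C + A + B) * B = 1 * B" using e2 by (simp add: algebra_simps)
    hence "C + A + B = 1" using Bnz by simp
    hence "C = 1 - (A + B)" by (simp add: algebra_simps)
    hence Cv: "C = A + B + 1" using c2_diff[OF two] by (simp add: add.commute)
    have "A^2 + A*B + B^2*k + B = ((A+B+1)*A + k*B*B - (A+B)) + 2*B"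
      by (simp add: algebra_simps power2_eq_square)
    moreover have "(A+B+1)*A + k*B*B - (A+B) = 0" using e1 Cv by simp
    ultimately have eq: "A^2 + A*B + B^2*k + B = 0" using two by simp
    have "of_nat m + 1 = (0::'a)" using trN[OF Bnz eq] h by simp
    hence om: "odd m" using c2_of_nat[OF two, of m] by (cases "odd m") auto
    show "odd m \<and> C = A + B + 1 \<and> D = B \<and> A ^ 2 + A * B + B ^ 2 * k + B = 0 \<and> B \<noteq> 0"
      using om Cv DB eq Bnz by blast
  qed
  show ?thesis unfolding Let_def al_def[symmetric] be_def[symmetric] q_def[symmetric] using main .
qed

end
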